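(* For every finite strictly binary tree $T$ there exists an ultrametric space $(X,d)\in\mathfrak U$ such that the graphs $T$ and $\overline{T}_X$ are isomorphic.
   Context: $\operatorname{Sp}(X)=\{d(x,y):x\neq y\}$; $\mathfrak U$ is the class of finite ultrametric spaces $X$ with $|\operatorname{Sp}(X)|=|X|-1$. A strictly binary tree is a rooted tree whose root is adjacent to exactly two nodes and whose non-root non-leaf nodes are adjacent to exactly three nodes (a one-node tree counts as strictly binary). For a finite ultrametric space $X$ (with $X\cap\operatorname{Sp}(X)=\varnothing$), the representing tree $T_X$ is the labelled rooted tree defined recursively: for $X=\{x\}$ it is a single node labelled $x$; for $|X|\ge2$ the root is labelled $\operatorname{diam}X$ and has one child for each class $X_i$ of the equivalence relation $x\sim y\iff d(x,y)<\operatorname{diam}X$, that child being labelled $x$ if $X_i=\{x\}$ and otherwise labelled $\operatorname{diam}X_i$ and carrying the recursively constructed tree for $X_i$. $\overline{T}_X$ is the rooted tree obtained from $T_X$ by forgetting the labels. *)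

theory Defs
  imports Complex_Main
begin

definition ultrametric_space :: "'a set \<Rightarrow> ('a \<Rightarrow> 'a \<Rightarrow> real) \<Rightarrow> bool" where
  "ultrametric_space X d \<longleftrightarrow>
     (\<forall>x\<in>X. \<forall>y\<in>X. d x y \<ge> 0 \<and> (d x y = 0 \<longleftrightarrow> x = y) \<and> d x y = d y x) \<and>
     (\<forall>x\<in>X. \<forall>y\<in>X. \<forall>z\<in>X. d x y \<le> max (d x z) (d z y))"

definition Sp :: "'a set \<Rightarrow> ('a \<Rightarrow> 'a \<Rightarrow> real) \<Rightarrow> real set" where
  "Sp X d = {d x y | x y. x \<in> X \<and> y \<in> X \<and> x \<noteq> y}"

definition in_U :: "'a set \<Rightarrow> ('a \<Rightarrow> 'a \<Rightarrow> real) \<Rightarrow> bool" where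
  "in_U X d \<longleftrightarrow> finite X \<and> X \<noteq> {} \<and> ultrametric_space X d \<and> card (Sp X d) = card X - 1"

definition diam :: "'a set \<Rightarrow> ('a \<Rightarrow> 'a \<Rightarrow> real) \<Rightarrow> real" where
  "diam B d = Max {d x y | x y. x \<in> B \<and> y \<in> B}"

definition child_sets :: "'a set \<Rightarrow> ('a \<Rightarrow> 'a \<Rightarrow> real) \<Rightarrow> 'a set set" where
  "child_sets B d = {{y \<in> B. d x y < diam B d} | x. x \<in> B}"

text \<open>Nodes of the representing tree T_X, each node identified with the subset of X
  it represents (X for the root, the classes X_i recursively below).\<close>
inductive_set rep_nodes :: "'a set \<Rightarrow> ('a \<Rightarrow> 'a \<Rightarrow> real) \<Rightarrow> 'a set set"
  for X d where
  root: "X \<in> rep_nodes X d"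
| child: "B \<in> rep_nodes X d \<Longrightarrow> card B \<ge> 2 \<Longrightarrow> C \<in> child_sets B d \<Longrightarrow> C \<in> rep_nodes X d"

definition rep_edges :: "'a set \<Rightarrow> ('a \<Rightarrow> 'a \<Rightarrow> real) \<Rightarrow> ('a set \<times> 'a set) set" where
  "rep_edges X d =
     {(B, C) | B C. B \<in> rep_nodes X d \<and> card B \<ge> 2 \<and> C \<in> child_sets B d}
   \<union> {(C, B) | B C. B \<in> rep_nodes X d \<and> card B \<ge> 2 \<and> C \<in> child_sets B d}"

definition finite_tree :: "'v set \<Rightarrow> ('v \<times> 'v) set \<Rightarrow> bool" where
  "finite_tree V E \<longleftrightarrow> finite V \<and> V \<noteq> {} \<and> E \<subseteq> V \<times> V \<and> sym E \<and> irrefl E \<and>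
     (\<forall>u\<in>V. \<forall>v\<in>V. (u, v) \<in> E\<^sup>*) \<and> card E = 2 * (card V - 1)"

definition degree :: "('v \<times> 'v) set \<Rightarrow> 'v \<Rightarrow> nat" where
  "degree E v = card {w. (v, w) \<in> E}"

definition strictly_binary_tree :: "'v set \<Rightarrow> ('v \<times> 'v) set \<Rightarrow> 'v \<Rightarrow> bool" where
  "strictly_binary_tree V E r \<longleftrightarrow> finite_tree V E \<and> r \<in> V \<and>
     (card V = 1 \<or>
      (degree E r = 2 \<and> (\<forall>v\<in>V - {r}. degree E v = 1 \<or> degree E v = 3)))"

definition graph_iso :: "'v set \<Rightarrow> ('v \<times> 'v) set \<Rightarrow> 'w set \<Rightarrow> ('w \<times> 'w) set \<Rightarrow> bool" where
  "graph_iso V1 E1 V2 E2 \<longleftrightarrow> (\<exists>f. bij_betw f V1 V2 \<and>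
     (\<forall>u\<in>V1. \<forall>v\<in>V1. (u, v) \<in> E1 \<longleftrightarrow> (f u, f v) \<in> E2))"

end

theory Submission
  imports Defs
begin


lemma ultra_facts:
  assumes "ultrametric_space X d" "u \<in> X" "v \<in> X"
  shows "d u v \<ge> 0" "d u v = 0 \<longleftrightarrow> u = v" "d u v = d v u" "d u u = 0"
  using assms unfolding ultrametric_space_def by auto

lemma two_elems:
  assumes "2 \<le> card B"
  obtains u v where "u \<in> B" "v \<in> B" "u \<noteq> v"
proof -
  have "finite B" "B \<noteq> {}" using assms by (auto intro: ccontr)
  then obtain u where u: "u \<in> B" by auto
  have "card (B - {u}) \<ge> 1" using assms u \<open>finite B\<close> by simp
  then obtain v where "v \<in> B - {u}" by (metis card.empty ex_in_conv not_one_le_zero)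
  then show ?thesis using that u by auto
qed

lemma diam_props:
  assumes "finite B" "B \<noteq> {}"
  shows "\<And>u v. u \<in> B \<Longrightarrow> v \<in> B \<Longrightarrow> d u v \<le> diam B d"
    and "\<exists>u\<in>B. \<exists>v\<in>B. diam B d = d u v"
proof -
  have eq: "{d x y | x y. x \<in> B \<and> y \<in> B} = (\<lambda>(x,y). d x y) ` (B \<times> B)" by auto
  have fin: "finite {d x y | x y. x \<in> B \<and> y \<in> B}" unfolding eq using assms by simp
  have ne: "{d x y | x y. x \<in> B \<and> y \<in> B} \<noteq> {}" using assms by auto
  show "\<And>u v. u \<in> B \<Longrightarrow> v \<in> B \<Longrightarrow> d u v \<le> diam B d"
    unfolding diam_def using fin by (intro Max_ge) auto
  have "diam B d \<in> {d x y | x y. x \<in> B \<and> y \<in> B}" unfolding diam_def using fin ne by (rule Max_in)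
  then show "\<exists>u\<in>B. \<exists>v\<in>B. diam B d = d u v" by auto
qed

lemma diam_pos:
  assumes "ultrametric_space X d" "B \<subseteq> X" "2 \<le> card B"
  shows "diam B d > 0"
proof -
  obtain u v where uv: "u \<in> B" "v \<in> B" "u \<noteq> v" using two_elems assms(3) by blast
  have "finite B" using assms(3) by (auto intro: ccontr)
  have "d u v \<le> diam B d" using diam_props(1)[OF \<open>finite B\<close>] uv by blast
  moreover have "d u v > 0" using ultra_facts[OF assms(1)] uv assms(2)
    by (metis less_eq_real_def subsetD)
  ultimately show ?thesis by simp
qed

lemma nodes_sub:
  assumes "ultrametric_space X d" "finite X" "X \<noteq> {}" "B \<in> rep_nodes X d"
  shows "B \<subseteq> X \<and> B \<noteq> {}"
  using assms(4)
proof (induction rule: rep_nodes.induct)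
  case root then show ?case using assms by auto
next
  case (child B C)
  then obtain z where z: "z \<in> B" "C = {y \<in> B. d z y < diam B d}" unfolding child_sets_def by auto
  have "diam B d > 0" using diam_pos[OF assms(1)] child by auto
  moreover have "d z z = 0" using ultra_facts[OF assms(1)] z child by auto
  ultimately have "z \<in> C" using z by auto
  then show ?case using z child by auto
qed

lemma two_children:
  assumes "ultrametric_space X d" "B \<subseteq> X" "2 \<le> card B"
  obtains C1 C2 where "C1 \<in> child_sets B d" "C2 \<in> child_sets B d" "C1 \<noteq> C2"
proof -
  have fin: "finite B" "B \<noteq> {}" using assms(3) by (auto intro: ccontr)
  obtain u v where uv: "u \<in> B" "v \<in> B" "diam B d = d u v" using diam_props(2)[OF fin] by blast
  have pos: "diam B d > 0" using diam_pos[OF assms] .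
  let ?C1 = "{y \<in> B. d u y < diam B d}" and ?C2 = "{y \<in> B. d v y < diam B d}"
  have "v \<notin> ?C1" using uv by auto
  moreover have "v \<in> ?C2" using uv pos ultra_facts(4)[OF assms(1), of v] assms(2) by auto
  ultimately have "?C1 \<noteq> ?C2" by blast
  moreover have "?C1 \<in> child_sets B d" "?C2 \<in> child_sets B d" unfolding child_sets_def using uv by auto
  ultimately show ?thesis using that by blast
qed

definition kid :: "'a set \<Rightarrow> ('a \<Rightarrow> 'a \<Rightarrow> real) \<Rightarrow> ('a set \<times> 'a set) set" where
  "kid X d = {(B, C). B \<in> rep_nodes X d \<and> 2 \<le> card B \<and> C \<in> child_sets B d}"

lemma rep_edges_kid: "rep_edges X d = kid X d \<union> (kid X d)\<inverse>"
  unfolding rep_edges_def kid_def by auto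

lemma kid_sub: "kid X d \<subseteq> rep_nodes X d \<times> rep_nodes X d"
  unfolding kid_def by (auto intro: rep_nodes.child)



lemma card_E_sum:
  assumes "E \<subseteq> V \<times> V" "finite V"
  shows "card E = (\<Sum>v\<in>V. degree E v)"
proof -
  have eq: "E = Sigma V (\<lambda>v. {w. (v, w) \<in> E})" using assms(1) by auto
  have fin: "\<And>v. finite {w. (v, w) \<in> E}"
  proof -
    fix v have "{w. (v, w) \<in> E} \<subseteq> V" using assms(1) by auto
    then show "finite {w. (v, w) \<in> E}" using assms(2) by (rule finite_subset)
  qed
  have "card (Sigma V (\<lambda>v. {w. (v, w) \<in> E})) = (\<Sum>v\<in>V. card {w. (v, w) \<in> E})"
    using assms(2) fin by (intro card_SigmaI) auto
  with arg_cong[of _ _ card, OF eq] show ?thesis unfolding degree_def by (rule trans)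
qed

lemma deg1_nb:
  assumes "degree E v = 1"
  shows "{w. (v, w) \<in> E} = {the_elem {w. (v, w) \<in> E}}"
proof -
  obtain w where "{w. (v, w) \<in> E} = {w}" using assms card_1_singleton_iff[of "{w. (v, w) \<in> E}"] unfolding degree_def by (simp only: One_nat_def) blast
  then show ?thesis by simp
qed

lemma cherry:
  assumes sbt: "strictly_binary_tree V E r" and nt: "card V \<noteq> 1"
  shows "\<exists>p a b. a \<noteq> b \<and> a \<in> V \<and> b \<in> V \<and> a \<noteq> r \<and> b \<noteq> r \<and>
            {w. (a, w) \<in> E} = {p} \<and> {w. (b, w) \<in> E} = {p}"
proof -
  have ft: "finite_tree V E" and rV: "r \<in> V" and dr: "degree E r = 2"
    and dv: "\<And>v. v \<in> V - {r} \<Longrightarrow> degree E v = 1 \<or> degree E v = 3"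
    using sbt nt unfolding strictly_binary_tree_def by auto
  have finV: "finite V" and EV: "E \<subseteq> V \<times> V" and symE: "sym E"
    and conn: "\<And>u v. u \<in> V \<Longrightarrow> v \<in> V \<Longrightarrow> (u, v) \<in> E\<^sup>*"
    and cE: "card E = 2 * (card V - 1)"
    using ft unfolding finite_tree_def by auto
  define L where "L = {v \<in> V - {r}. degree E v = 1}"
  define I where "I = {v \<in> V - {r}. degree E v = 3}"
  have finL: "finite L" "finite I" using finV unfolding L_def I_def by auto
  have VrLI: "V - {r} = L \<union> I" "L \<inter> I = {}" using dv unfolding L_def I_def by auto
  have "(\<Sum>v\<in>V. degree E v) = degree E r + (\<Sum>v\<in>V - {r}. degree E v)"
    using finV rV by (rule sum.remove)
  also have "(\<Sum>v\<in>V - {r}. degree E v) = (\<Sum>v\<in>L. degree E v) + (\<Sum>v\<in>I. degree E v)"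
    using VrLI finL by (simp add: sum.union_disjoint)
  also have "(\<Sum>v\<in>L. degree E v) = card L" unfolding L_def by simp
  also have "(\<Sum>v\<in>I. degree E v) = 3 * card I" unfolding I_def by simp
  finally have s: "card E = 2 + card L + 3 * card I" using card_E_sum[OF EV finV] dr by simp
  have "card V = 1 + card (V - {r})" using finV rV
    by (metis add.commute card_Suc_Diff1 plus_1_eq_Suc)
  also have "card (V - {r}) = card L + card I" using VrLI finL by (simp add: card_Un_disjoint)
  finally have cV: "card V = 1 + card L + card I" by simp
  have "card V - 1 = card L + card I" using cV by simp
  then have cL: "card L = card I + 2" using s cE by simp
  define nbr where "nbr l = the_elem {w. (l, w) \<in> E}" for l
  have nbl: "{w. (l, w) \<in> E} = {nbr l}" if "l \<in> L" for l
  proof -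
    have "degree E l = 1" using that unfolding L_def by simp
    then show ?thesis unfolding nbr_def by (rule deg1_nb)
  qed
  have nbr_notL: "nbr l \<notin> L" if l: "l \<in> L" for l
  proof
    assume l2: "nbr l \<in> L"
    have e1: "(l, nbr l) \<in> E" using nbl[OF l] by auto
    then have "(nbr l, l) \<in> E" using symE by (meson symD)
    then have "l \<in> {w. (nbr l, w) \<in> E}" by simp
    then have nb2: "{w. (nbr l, w) \<in> E} = {l}" using nbl[OF l2] by simp
    have "v \<in> {l, nbr l}" if "(l, v) \<in> E\<^sup>*" for v
      using that
    proof (induction rule: rtrancl_induct)
      case base then show ?case by simp
    next
      case (step y z)
      from step.IH consider "y = l" | "y = nbr l" by blast
      then show ?case
      proof cases
        case 1
        then have "z \<in> {w. (l, w) \<in> E}" using step(2) by simp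
        then show ?thesis unfolding nbl[OF l] by simp
      next
        case 2
        then have "z \<in> {w. (nbr l, w) \<in> E}" using step(2) by simp
        then show ?thesis unfolding nb2 by simp
      qed
    qed
    moreover have "(l, r) \<in> E\<^sup>*" using conn rV l unfolding L_def by auto
    ultimately have "r \<in> {l, nbr l}" by blast
    then show False using l l2 unfolding L_def by auto
  qed
  have nbrV: "nbr l \<in> insert r I" if "l \<in> L" for l
  proof -
    have "(l, nbr l) \<in> E" using nbl[OF that] by auto
    then have "nbr l \<in> V" using EV by auto
    then show ?thesis using VrLI nbr_notL[OF that] by auto
  qed
  have "\<not> inj_on nbr L"
  proof
    assume "inj_on nbr L"
    then have "card L \<le> card (insert r I)" using nbrV finL by (intro card_inj_on_le) auto
    also have "\<dots> \<le> card I + 1" using finL by (simp add: card_insert_if)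
    finally show False using cL by simp
  qed
  then obtain a b where ab: "a \<in> L" "b \<in> L" "a \<noteq> b" "nbr a = nbr b"
    unfolding inj_on_def by blast
  have "{w. (a, w) \<in> E} = {nbr a}" "{w. (b, w) \<in> E} = {nbr a}" using nbl ab by auto
  moreover have "a \<in> V" "b \<in> V" "a \<noteq> r" "b \<noteq> r" using ab unfolding L_def by auto
  ultimately show ?thesis using ab(3) by blast
qed

lemma remove_leaf_conn:
  assumes symE: "sym E" and na: "{w. (a, w) \<in> E} = {p}" and pa: "p \<noteq> a"
    and uv: "(u, v) \<in> E\<^sup>*" and u: "u \<noteq> a" and v: "v \<noteq> a"
  shows "(u, v) \<in> {(x, y) \<in> E. x \<noteq> a \<and> y \<noteq> a}\<^sup>*"
proof -
  let ?E1 = "{(x, y) \<in> E. x \<noteq> a \<and> y \<noteq> a}"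
  have "(y \<noteq> a \<longrightarrow> (u, y) \<in> ?E1\<^sup>*) \<and> (y = a \<longrightarrow> (u, p) \<in> ?E1\<^sup>*)" if "(u, y) \<in> E\<^sup>*" for y
    using that
  proof (induction rule: rtrancl_induct)
    case base then show ?case using u by simp
  next
    case (step y z)
    show ?case
    proof (cases "z = a")
      case True
      then have "(a, y) \<in> E" using step symE by (meson symD)
      then have "y = p" using na by auto
      then show ?thesis using step True pa by auto
    next
      case False
      show ?thesis
      proof (cases "y = a")
        case True
        then have "z = p" using na step by auto
        then show ?thesis using step True False by auto
      next
        case ya: False
        then have "(u, y) \<in> ?E1\<^sup>*" using step by auto
        moreover have "(y, z) \<in> ?E1" using step ya False by auto
        ultimately have "(u, z) \<in> ?E1\<^sup>*" by (rule rtrancl_into_rtrancl)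
        then show ?thesis using False by blast
      qed
    qed
  qed
  then show ?thesis using uv v by auto
qed



lemma remove_cherry:
  assumes sbt: "strictly_binary_tree V E r"
    and ab: "a \<noteq> b" "a \<in> V" "b \<in> V" "a \<noteq> r" "b \<noteq> r"
    and na: "{w. (a, w) \<in> E} = {p}" and nb: "{w. (b, w) \<in> E} = {p}"
    and V'_def: "V' = V - {a, b}"
    and E'_def: "E' = {(x, y) \<in> E. x \<notin> {a, b} \<and> y \<notin> {a, b}}"
  shows "strictly_binary_tree V' E' r" "card V' < card V" "p \<in> V'"
    "E = E' \<union> {(p, a), (a, p), (p, b), (b, p)}" "V = V' \<union> {a, b}" "a \<notin> V'" "b \<notin> V'"
    "\<And>v1 v2. (p, v1) \<in> E' \<Longrightarrow> (p, v2) \<in> E' \<Longrightarrow> v1 = v2" "E' \<subseteq> V' \<times> V'"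
proof -
  have ncard1: "card V \<noteq> 1"
  proof
    assume "card V = 1"
    then obtain z where "V = {z}" by (metis card_1_singleton_iff One_nat_def)
    then show False using ab by auto
  qed
  have ft: "finite_tree V E" and rV: "r \<in> V" and dr: "degree E r = 2"
    and dv: "\<And>v. v \<in> V - {r} \<Longrightarrow> degree E v = 1 \<or> degree E v = 3"
    using sbt ncard1 unfolding strictly_binary_tree_def by auto
  have finV: "finite V" and EV: "E \<subseteq> V \<times> V" and symE: "sym E" and irr: "irrefl E"
    and conn: "\<And>u v. u \<in> V \<Longrightarrow> v \<in> V \<Longrightarrow> (u, v) \<in> E\<^sup>*"
    and cE: "card E = 2 * (card V - 1)"
    using ft unfolding finite_tree_def by auto
  have ap: "(a, p) \<in> E" "(b, p) \<in> E" using na nb by auto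
  then have pa: "(p, a) \<in> E" "(p, b) \<in> E" using symE by (auto dest: symD)
  have pV: "p \<in> V" using ap EV by auto
  have "p \<noteq> a" "p \<noteq> b" using ap irr unfolding irrefl_def by auto
  then show pV': "p \<in> V'" using pV V'_def by auto
  note pne = \<open>p \<noteq> a\<close> \<open>p \<noteq> b\<close>
  have toa: "x = p" if "(x, a) \<in> E" for x
  proof -
    have "(a, x) \<in> E" using that symE by (auto dest: symD)
    then show ?thesis using na by auto
  qed
  have tob: "x = p" if "(x, b) \<in> E" for x
  proof -
    have "(b, x) \<in> E" using that symE by (auto dest: symD)
    then show ?thesis using nb by auto
  qed
  show Edec: "E = E' \<union> {(p, a), (a, p), (p, b), (b, p)}"
  proof
    show "E \<subseteq> E' \<union> {(p, a), (a, p), (p, b), (b, p)}"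
    proof
      fix e assume e: "e \<in> E"
      obtain x y where xy: "e = (x, y)" by force
      show "e \<in> E' \<union> {(p, a), (a, p), (p, b), (b, p)}"
        using e xy na nb toa tob unfolding E'_def by auto
    qed
    show "E' \<union> {(p, a), (a, p), (p, b), (b, p)} \<subseteq> E" using ap pa unfolding E'_def by auto
  qed
  show "V = V' \<union> {a, b}" "a \<notin> V'" "b \<notin> V'" using V'_def ab by auto
  show E'V': "E' \<subseteq> V' \<times> V'" using EV unfolding E'_def V'_def by auto
  have finV': "finite V'" using finV V'_def by auto
  have finE': "finite E'" using E'V' finV' by (meson finite_SigmaI finite_subset)
  have c4: "card {(p, a), (a, p), (p, b), (b, p)} = 4" using ab pne by auto
  have "card E = card E' + card {(p, a), (a, p), (p, b), (b, p)}"
    unfolding Edec using finE' by (intro card_Un_disjoint) (auto simp: E'_def)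
  then have cE': "card E = card E' + 4" using c4 by simp
  have "card {a, b} \<le> card V" using finV ab by (intro card_mono) auto
  then have cV': "card V = card V' + 2" using finV ab unfolding V'_def
    by (simp add: card_Diff_subset)
  show "card V' < card V" using cV' by simp
  have nbv: "{w. (v, w) \<in> E'} = {w. (v, w) \<in> E}" if "v \<in> V'" "v \<noteq> p" for v
    using that toa tob symE unfolding E'_def V'_def by (auto dest: symD)
  have nbp: "{w. (p, w) \<in> E'} = {w. (p, w) \<in> E} - {a, b}"
    using pne unfolding E'_def by auto
  have "{w. (p, w) \<in> E} \<subseteq> V" using EV by auto
  then have finN: "finite {w. (p, w) \<in> E}" using finV by (rule finite_subset)
  have abN: "{a, b} \<subseteq> {w. (p, w) \<in> E}" using pa by auto
  have degp: "degree E p = 2 \<or> degree E p = 3"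
  proof -
    have "card {a, b} \<le> degree E p" unfolding degree_def using finN abN by (rule card_mono)
    then have "degree E p \<ge> 2" using ab by simp
    then show ?thesis using dv[of p] dr pV by (cases "p = r") auto
  qed
  have degp': "degree E' p = degree E p - 2" unfolding degree_def nbp
    using finN abN ab by (simp add: card_Diff_subset)
  have finNp': "finite {w. (p, w) \<in> E'}" unfolding nbp using finN by simp
  show "\<And>v1 v2. (p, v1) \<in> E' \<Longrightarrow> (p, v2) \<in> E' \<Longrightarrow> v1 = v2"
  proof -
    fix v1 v2 assume "(p, v1) \<in> E'" "(p, v2) \<in> E'"
    moreover have "card {w. (p, w) \<in> E'} \<le> Suc 0" using degp' degp unfolding degree_def by auto
    ultimately show "v1 = v2" using card_le_Suc0_iff_eq[OF finNp'] by auto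
  qed
  have conn': "(u, v) \<in> E'\<^sup>*" if "u \<in> V'" "v \<in> V'" for u v
  proof -
    let ?E1 = "{(x, y) \<in> E. x \<noteq> a \<and> y \<noteq> a}"
    have uv: "(u, v) \<in> E\<^sup>*" using conn that V'_def by auto
    have 1: "(u, v) \<in> ?E1\<^sup>*"
      by (rule remove_leaf_conn[OF symE na pne(1) uv]) (use that V'_def in auto)
    have s1: "sym ?E1" using symE unfolding sym_def by auto
    have n1: "{w. (b, w) \<in> ?E1} = {p}" using nb ab pne by auto
    have 2: "(u, v) \<in> {(x, y) \<in> ?E1. x \<noteq> b \<and> y \<noteq> b}\<^sup>*"
      by (rule remove_leaf_conn[OF s1 n1 pne(2) 1]) (use that V'_def in auto)
    have "{(x, y) \<in> ?E1. x \<noteq> b \<and> y \<noteq> b} = E'" unfolding E'_def by auto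
    then show ?thesis using 2 by simp
  qed
  have ft': "finite_tree V' E'"
    unfolding finite_tree_def
  proof (intro conjI)
    show "finite V'" by fact
    show "V' \<noteq> {}" using pV' by auto
    show "E' \<subseteq> V' \<times> V'" by fact
    show "sym E'" using symE unfolding sym_def E'_def by auto
    show "irrefl E'" using irr unfolding irrefl_def E'_def by auto
    show "\<forall>u\<in>V'. \<forall>v\<in>V'. (u, v) \<in> E'\<^sup>*" using conn' by auto
    show "card E' = 2 * (card V' - 1)" using cE cE' cV' pV' finV'
      by (cases "card V'") auto
  qed
  have rV': "r \<in> V'" using rV ab V'_def by auto
  show "strictly_binary_tree V' E' r"
    unfolding strictly_binary_tree_def
  proof (intro conjI ft' rV')
    show "card V' = 1 \<or> degree E' r = 2 \<and> (\<forall>v\<in>V' - {r}. degree E' v = 1 \<or> degree E' v = 3)"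
    proof (cases "p = r")
      case True
      then have "degree E' r = 0" using degp' dr by simp
      then have em: "{w. (r, w) \<in> E'} = {}" unfolding degree_def using finNp' True by simp
      have "v = r" if "v \<in> V'" for v
      proof -
        have "(r, v) \<in> E'\<^sup>*" using conn' rV' that by auto
        then show ?thesis
        proof (rule converse_rtranclE)
          assume "r = v" then show ?thesis by simp
        next
          fix y assume "(r, y) \<in> E'" then show ?thesis using em by blast
        qed
      qed
      then have "V' = {r}" using rV' by blast
      then show ?thesis by simp
    next
      case False
      have "degree E' r = 2" using nbv[OF rV'] False dr unfolding degree_def by auto
      moreover have "degree E' v = 1 \<or> degree E' v = 3" if "v \<in> V' - {r}" for v
      proof (cases "v = p")
        case True
        then have "degree E p = 3" using dv[of p] degp pV False by auto
        then show ?thesis using degp' True by simp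
      next
        case vp: False
        then have "degree E' v = degree E v" using nbv that unfolding degree_def by auto
        then show ?thesis using dv[of v] that V'_def by auto
      qed
      ultimately show ?thesis by auto
    qed
  qed
qed



locale split_pt =
  fixes X' :: "nat set" and d' :: "nat \<Rightarrow> nat \<Rightarrow> real" and x x' :: nat
  assumes U: "in_U X' d'" and xX: "x \<in> X'" and x'X: "x' \<notin> X'"
begin

definition "sg u = (if u = x' then x else u)"
definition "dl = Min (insert 1 (Sp X' d')) / 2"
definition "dd u v = (if u = v then 0 else if sg u = sg v then dl else d' (sg u) (sg v))"
definition "ext B = (if x \<in> B then insert x' B else B)"
definition "XX = insert x' X'"

lemma finX': "finite X'" and um': "ultrametric_space X' d'" and cSp': "card (Sp X' d') = card X' - 1"
  using U unfolding in_U_def by auto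

lemma finSp: "finite (Sp X' d')"
proof -
  have "Sp X' d' \<subseteq> (\<lambda>(u, v). d' u v) ` (X' \<times> X')" unfolding Sp_def by auto
  then show ?thesis using finX' by (meson finite_SigmaI finite_imageI finite_subset)
qed

lemma Sp_pos: "s \<in> Sp X' d' \<Longrightarrow> s > 0"
  unfolding Sp_def using ultra_facts[OF um'] by (auto simp: less_le)

lemma dl_pos: "dl > 0"
proof -
  have "0 < Min (insert 1 (Sp X' d'))" using finSp Sp_pos by (subst Min_gr_iff) auto
  then show ?thesis unfolding dl_def by simp
qed

lemma dl_lt: "s \<in> Sp X' d' \<Longrightarrow> dl < s"
proof -
  assume s: "s \<in> Sp X' d'"
  have "Min (insert 1 (Sp X' d')) \<le> s" using finSp s by (intro Min_le) auto
  then show ?thesis using dl_pos unfolding dl_def by simp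
qed

lemma dl_notin: "dl \<notin> Sp X' d'" using dl_lt by blast

lemma sg_X: "u \<in> XX \<Longrightarrow> sg u \<in> X'" unfolding sg_def XX_def using xX by auto
lemma sg_id: "u \<in> X' \<Longrightarrow> sg u = u" unfolding sg_def using x'X by auto

lemma dd_X': "u \<in> X' \<Longrightarrow> v \<in> X' \<Longrightarrow> dd u v = d' u v"
  unfolding dd_def using sg_id ultra_facts(4)[OF um'] by auto

lemma dd_Sp: "u \<in> XX \<Longrightarrow> v \<in> XX \<Longrightarrow> sg u \<noteq> sg v \<Longrightarrow> d' (sg u) (sg v) \<in> Sp X' d'"
  unfolding Sp_def using sg_X by blast

lemma dd_ge: "u \<in> XX \<Longrightarrow> v \<in> XX \<Longrightarrow> u \<noteq> v \<Longrightarrow> dl \<le> dd u v"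
  unfolding dd_def using dd_Sp dl_lt by (auto simp: less_imp_le)

lemma dd_ge': "u \<in> XX \<Longrightarrow> v \<in> XX \<Longrightarrow> d' (sg u) (sg v) \<le> dd u v"
proof -
  assume u: "u \<in> XX" and v: "v \<in> XX"
  have "d' (sg v) (sg v) = 0" using ultra_facts(4)[OF um'] sg_X[OF v] by auto
  then show ?thesis unfolding dd_def using dl_pos by auto
qed

lemma um: "ultrametric_space XX dd"
  unfolding ultrametric_space_def
proof (intro conjI ballI)
  fix u v assume u: "u \<in> XX" and v: "v \<in> XX"
  show "0 \<le> dd u v" using dd_ge[OF u v] dl_pos unfolding dd_def by (cases "u = v") auto
  show "(dd u v = 0) = (u = v)" using dd_ge[OF u v] dl_pos unfolding dd_def by (cases "u = v") auto
  show "dd u v = dd v u" unfolding dd_def using ultra_facts(3)[OF um'] sg_X u v by auto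
next
  fix u v w assume u: "u \<in> XX" and v: "v \<in> XX" and w: "w \<in> XX"
  show "dd u v \<le> max (dd u w) (dd w v)"
  proof (cases "u = v")
    case True then show ?thesis
      using dd_ge[OF u w] dd_ge[OF w v] dl_pos unfolding dd_def by (auto simp: max_def)
  next
    case uv: False
    show ?thesis
    proof (cases "sg u = sg v")
      case True
      then have "dd u v = dl" using uv unfolding dd_def by simp
      moreover have "u \<noteq> w \<or> w \<noteq> v" using uv by auto
      ultimately show ?thesis using dd_ge[OF u w] dd_ge[OF w v] by (auto simp: max_def)
    next
      case False
      then have "dd u v = d' (sg u) (sg v)" using uv unfolding dd_def by simp
      also have "\<dots> \<le> max (d' (sg u) (sg w)) (d' (sg w) (sg v))"
        using um' sg_X u v w unfolding ultrametric_space_def by blast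
      also have "\<dots> \<le> max (dd u w) (dd w v)" using dd_ge'[OF u w] dd_ge'[OF w v] by auto
      finally show ?thesis .
    qed
  qed
qed

lemma x'x: "x' \<noteq> x" using xX x'X by auto

lemma Sp_new: "Sp XX dd = insert dl (Sp X' d')"
proof
  show "Sp XX dd \<subseteq> insert dl (Sp X' d')"
  proof
    fix s assume "s \<in> Sp XX dd"
    then obtain u v where uv: "u \<in> XX" "v \<in> XX" "u \<noteq> v" "s = dd u v" unfolding Sp_def by auto
    show "s \<in> insert dl (Sp X' d')"
      using uv dd_Sp[OF uv(1,2)] unfolding dd_def by auto
  qed
  show "insert dl (Sp X' d') \<subseteq> Sp XX dd"
  proof
    fix s assume "s \<in> insert dl (Sp X' d')"
    then consider "s = dl" | "s \<in> Sp X' d'" by blast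
    then show "s \<in> Sp XX dd"
    proof cases
      case 1
      have "dd x x' = dl" unfolding dd_def sg_def using x'x by auto
      have "\<exists>a b. s = dd a b \<and> a \<in> XX \<and> b \<in> XX \<and> a \<noteq> b"
        using 1 xX x'x \<open>dd x x' = dl\<close> by (intro exI[of _ x] exI[of _ x']) (auto simp: XX_def)
      then show ?thesis unfolding Sp_def by blast
    next
      case 2
      then obtain u v where uv: "u \<in> X'" "v \<in> X'" "u \<noteq> v" "s = d' u v" unfolding Sp_def by auto
      then have "s = dd u v" using dd_X' by simp
      have "\<exists>a b. s = dd a b \<and> a \<in> XX \<and> b \<in> XX \<and> a \<noteq> b"
        using uv \<open>s = dd u v\<close> by (intro exI[of _ u] exI[of _ v]) (auto simp: XX_def)
      then show ?thesis unfolding Sp_def by blast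
    qed
  qed
qed

lemma inU: "in_U XX dd"
proof -
  have "card XX = card X' + 1" unfolding XX_def using finX' x'X by simp
  moreover have "card (Sp XX dd) = card (Sp X' d') + 1" unfolding Sp_new using finSp dl_notin by simp
  moreover have "card X' \<ge> 1" using xX finX' by (metis One_nat_def card_gt_0_iff empty_iff Suc_leI)
  ultimately show ?thesis unfolding in_U_def using um finX' cSp' unfolding XX_def by auto
qed

end



context split_pt
begin

lemma ext_sub: "B0 \<subseteq> X' \<Longrightarrow> ext B0 \<subseteq> XX" unfolding ext_def XX_def by auto
lemma ext_sup: "B0 \<subseteq> ext B0" unfolding ext_def by auto
lemma sg_ext: "B0 \<subseteq> X' \<Longrightarrow> sg ` ext B0 = B0"
  unfolding ext_def sg_def using x'X by (auto simp: image_iff)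
lemma sg_in: "y \<in> ext B0 \<Longrightarrow> B0 \<subseteq> X' \<Longrightarrow> sg y \<in> B0"
  using sg_ext by blast
lemma ext_char: "C \<subseteq> B0 \<Longrightarrow> B0 \<subseteq> X' \<Longrightarrow> ext C = {y \<in> ext B0. sg y \<in> C}"
  unfolding ext_def sg_def using x'X x'x by auto

lemma diam_gt:
  assumes B0: "B0 \<subseteq> X'" "2 \<le> card B0"
  shows "dl < diam B0 d'"
proof -
  obtain u v where uv: "u \<in> B0" "v \<in> B0" "u \<noteq> v" using two_elems B0(2) by blast
  have fin: "finite B0" using B0 finX' finite_subset by blast
  have "d' u v \<in> Sp X' d'" unfolding Sp_def using uv B0 by blast
  then have "dl < d' u v" by (rule dl_lt)
  also have "d' u v \<le> diam B0 d'" using diam_props(1)[OF fin] uv by blast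
  finally show ?thesis .
qed

lemma diam_ext:
  assumes B0: "B0 \<subseteq> X'" "2 \<le> card B0"
  shows "diam (ext B0) dd = diam B0 d'"
proof -
  have fin: "finite B0" using B0 finX' finite_subset by blast
  have fin2: "finite (ext B0)" using fin unfolding ext_def by auto
  have ne: "B0 \<noteq> {}" using B0 by auto
  let ?S = "{dd u v | u v. u \<in> ext B0 \<and> v \<in> ext B0}"
  have eq: "?S = (\<lambda>(u, v). dd u v) ` (ext B0 \<times> ext B0)" by auto
  have finS: "finite ?S" unfolding eq using fin2 by simp
  obtain u0 v0 where uv0: "u0 \<in> B0" "v0 \<in> B0" "diam B0 d' = d' u0 v0"
    using diam_props(2)[OF fin ne] by blast
  have D0: "0 \<le> diam B0 d'" using diam_gt[OF B0] dl_pos by simp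
  show ?thesis unfolding diam_def[of "ext B0"]
  proof (rule Max_eqI[OF finS])
    fix s assume "s \<in> ?S"
    then obtain u v where uv: "u \<in> ext B0" "v \<in> ext B0" "s = dd u v" by auto
    have su: "sg u \<in> B0" "sg v \<in> B0" using sg_in uv B0 by auto
    show "s \<le> diam B0 d'"
      using uv D0 diam_gt[OF B0] diam_props(1)[OF fin ne su] unfolding dd_def by auto
  next
    have "dd u0 v0 = d' u0 v0" using dd_X' uv0 B0 by auto
    moreover have "u0 \<in> ext B0" "v0 \<in> ext B0" using uv0 ext_sup by auto
    ultimately have "diam B0 d' = dd u0 v0 \<and> u0 \<in> ext B0 \<and> v0 \<in> ext B0" using uv0 by simp
    then show "diam B0 d' \<in> ?S" by blast
  qed
qed

lemma child_ext:
  assumes B0: "B0 \<subseteq> X'" "2 \<le> card B0"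
  shows "child_sets (ext B0) dd = ext ` child_sets B0 d'"
proof -
  let ?D = "diam B0 d'"
  have D: "dl < ?D" "0 < ?D" using diam_gt[OF B0] dl_pos by auto
  have cl: "{y \<in> ext B0. dd z y < ?D} = ext {y \<in> B0. d' (sg z) y < ?D}" if z: "z \<in> ext B0" for z
  proof -
    have "ext {y \<in> B0. d' (sg z) y < ?D} = {y \<in> ext B0. sg y \<in> {y \<in> B0. d' (sg z) y < ?D}}"
      using B0 by (intro ext_char) auto
    also have "\<dots> = {y \<in> ext B0. dd z y < ?D}"
    proof (intro Collect_cong conj_cong refl)
      fix y assume y: "y \<in> ext B0"
      have "sg y \<in> B0" "sg z \<in> B0" using sg_in y z B0 by auto
      moreover have "d' (sg y) (sg y) = 0" using ultra_facts(4)[OF um'] \<open>sg y \<in> B0\<close> B0 by auto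
      ultimately show "(sg y \<in> {y \<in> B0. d' (sg z) y < ?D}) = (dd z y < ?D)"
        unfolding dd_def using D by auto
    qed
    finally show ?thesis by simp
  qed
  have "child_sets (ext B0) dd = {ext {y \<in> B0. d' (sg z) y < ?D} | z. z \<in> ext B0}"
    unfolding child_sets_def diam_ext[OF B0] using cl by blast
  also have "\<dots> = {ext {y \<in> B0. d' w y < ?D} | w. w \<in> sg ` ext B0}" by blast
  also have "\<dots> = ext ` child_sets B0 d'" unfolding sg_ext[OF B0(1)] child_sets_def by blast
  finally show ?thesis .
qed

lemma child_pair: "child_sets {x, x'} dd = {{x}, {x'}}"
proof -
  have "{dd u v | u v. u \<in> {x, x'} \<and> v \<in> {x, x'}} = {0, dl}"
    unfolding dd_def sg_def using x'x by auto
  then have dm: "diam {x, x'} dd = dl" unfolding diam_def using dl_pos by simp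
  have dxx: "dd x x' = dl" "dd x' x = dl" unfolding dd_def sg_def using x'x by auto
  have dxx0: "dd x x = 0" "dd x' x' = 0" unfolding dd_def by auto
  have "{y \<in> {x, x'}. dd x y < dl} = {x}" "{y \<in> {x, x'}. dd x' y < dl} = {x'}"
    using dxx dxx0 dl_pos x'x by auto
  then show ?thesis unfolding child_sets_def dm by auto
qed

lemma ext_inj: "inj_on ext (Pow X')"
proof (rule inj_onI)
  fix A B assume "A \<in> Pow X'" "B \<in> Pow X'" "ext A = ext B"
  then have "ext A - {x'} = ext B - {x'}" by simp
  moreover have "ext A - {x'} = A" "ext B - {x'} = B"
    using \<open>A \<in> Pow X'\<close> \<open>B \<in> Pow X'\<close> x'X unfolding ext_def by auto
  ultimately show "A = B" by simp
qed

lemma nodes': "B \<in> rep_nodes X' d' \<Longrightarrow> B \<subseteq> X' \<and> B \<noteq> {}"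
  using nodes_sub[OF um' finX'] xX by blast

lemma ext_x: "ext {x} = {x, x'}" unfolding ext_def by auto

lemma ext_card:
  assumes "B0 \<in> rep_nodes X' d'" "2 \<le> card (ext B0)"
  shows "2 \<le> card B0 \<or> B0 = {x}"
proof (rule ccontr)
  assume c: "\<not> (2 \<le> card B0 \<or> B0 = {x})"
  have "B0 \<subseteq> X'" "B0 \<noteq> {}" using nodes' assms(1) by auto
  then have "finite B0" using finX' finite_subset by blast
  then have "card B0 = 1" using c \<open>B0 \<noteq> {}\<close> by (simp add: Suc_leI card_gt_0_iff le_antisym)
  then obtain y where "B0 = {y}" by (metis One_nat_def card_1_singleton_iff)
  then show False using c assms(2) unfolding ext_def by (auto split: if_splits)
qed

lemma card_ext: "B0 \<subseteq> X' \<Longrightarrow> 2 \<le> card B0 \<Longrightarrow> 2 \<le> card (ext B0)"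
proof -
  assume "B0 \<subseteq> X'" "2 \<le> card B0"
  moreover have "finite (ext B0)" using \<open>B0 \<subseteq> X'\<close> finX' finite_subset unfolding ext_def by auto
  ultimately show ?thesis using card_mono[OF _ ext_sup] by (meson order_trans)
qed

end



context split_pt
begin

lemma XX_ext: "XX = ext X'" unfolding XX_def ext_def using xX by auto

lemma card_pair: "card {x, x'} = 2" using x'x by auto

lemma ext_nodes: "B0 \<in> rep_nodes X' d' \<Longrightarrow> ext B0 \<in> rep_nodes XX dd"
proof (induction rule: rep_nodes.induct)
  case root then show ?case unfolding XX_ext[symmetric] by (rule rep_nodes.root)
next
  case (child B0 C0)
  have B0: "B0 \<subseteq> X'" using nodes' child.hyps(1) by auto
  show ?case
  proof (rule rep_nodes.child[OF child.IH])
    show "2 \<le> card (ext B0)" using card_ext B0 child.hyps(2) by blast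
    show "ext C0 \<in> child_sets (ext B0) dd" using child_ext[OF B0 child.hyps(2)] child.hyps(3) by blast
  qed
qed

lemma kid_cases:
  assumes B: "B \<in> ext ` rep_nodes X' d' \<union> {{x}, {x'}}" and cB: "2 \<le> card B"
    and C: "C \<in> child_sets B dd"
  shows "(\<exists>B0 C0. B = ext B0 \<and> C = ext C0 \<and> (B0, C0) \<in> kid X' d') \<or>
         (B = {x, x'} \<and> C \<in> {{x}, {x'}})"
proof -
  have "B \<noteq> {x}" "B \<noteq> {x'}" using cB by auto
  then obtain B0 where B0: "B0 \<in> rep_nodes X' d'" "B = ext B0" using B by auto
  have B0X: "B0 \<subseteq> X'" using nodes' B0(1) by auto
  from ext_card[OF B0(1)] cB B0(2) consider "2 \<le> card B0" | "B0 = {x}" by blast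
  then show ?thesis
  proof cases
    case 1
    then obtain C0 where "C0 \<in> child_sets B0 d'" "C = ext C0"
      using C child_ext[OF B0X 1] B0(2) by auto
    then show ?thesis using B0 1 unfolding kid_def by blast
  next
    case 2
    then show ?thesis using C B0(2) child_pair ext_x by auto
  qed
qed

lemma nodes_new:
  assumes sx: "{x} \<in> rep_nodes X' d'"
  shows "rep_nodes XX dd = ext ` rep_nodes X' d' \<union> {{x}, {x'}}"
proof
  show "rep_nodes XX dd \<subseteq> ext ` rep_nodes X' d' \<union> {{x}, {x'}}"
  proof
    fix B assume "B \<in> rep_nodes XX dd"
    then show "B \<in> ext ` rep_nodes X' d' \<union> {{x}, {x'}}"
    proof (induction rule: rep_nodes.induct)
      case root
      show ?case unfolding XX_ext using rep_nodes.root by blast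
    next
      case (child B C)
      from kid_cases[OF child.IH child.hyps(2,3)] show ?case
        unfolding kid_def by (auto intro: rep_nodes.child)
    qed
  qed
  have pn: "{x, x'} \<in> rep_nodes XX dd" using ext_nodes[OF sx] ext_x by simp
  have "{x} \<in> rep_nodes XX dd" "{x'} \<in> rep_nodes XX dd"
    using rep_nodes.child[OF pn] card_pair child_pair by auto
  then show "ext ` rep_nodes X' d' \<union> {{x}, {x'}} \<subseteq> rep_nodes XX dd"
    using ext_nodes by auto
qed

lemma kid_new:
  assumes sx: "{x} \<in> rep_nodes X' d'"
  shows "kid XX dd = map_prod ext ext ` kid X' d' \<union> {({x, x'}, {x}), ({x, x'}, {x'})}"
proof
  show "kid XX dd \<subseteq> map_prod ext ext ` kid X' d' \<union> {({x, x'}, {x}), ({x, x'}, {x'})}"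
  proof
    fix e assume e: "e \<in> kid XX dd"
    then obtain B C where BC: "e = (B, C)" "B \<in> rep_nodes XX dd" "2 \<le> card B" "C \<in> child_sets B dd"
      unfolding kid_def by auto
    from kid_cases[OF BC(2)[unfolded nodes_new[OF sx]] BC(3,4)]
    show "e \<in> map_prod ext ext ` kid X' d' \<union> {({x, x'}, {x}), ({x, x'}, {x'})}"
      using BC(1) by auto
  qed
  have pn: "{x, x'} \<in> rep_nodes XX dd" using ext_nodes[OF sx] ext_x by simp
  have "({x, x'}, {x}) \<in> kid XX dd" "({x, x'}, {x'}) \<in> kid XX dd"
    unfolding kid_def using pn card_pair child_pair by auto
  moreover have "map_prod ext ext ` kid X' d' \<subseteq> kid XX dd"
  proof
    fix e assume "e \<in> map_prod ext ext ` kid X' d'"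
    then obtain B0 C0 where e: "e = (ext B0, ext C0)" "B0 \<in> rep_nodes X' d'" "2 \<le> card B0"
      "C0 \<in> child_sets B0 d'" unfolding kid_def by auto
    have B0: "B0 \<subseteq> X'" using nodes' e(2) by auto
    show "e \<in> kid XX dd" unfolding kid_def using e ext_nodes[OF e(2)] card_ext[OF B0 e(3)]
      child_ext[OF B0 e(3)] by auto
  qed
  ultimately show "map_prod ext ext ` kid X' d' \<union> {({x, x'}, {x}), ({x, x'}, {x'})} \<subseteq> kid XX dd"
    by auto
qed

end



lemma iso_extend:
  assumes bij: "bij_betw f' V' W'" and iso: "\<forall>u\<in>V'. \<forall>v\<in>V'. (u, v) \<in> E' \<longleftrightarrow> (f' u, f' v) \<in> F'"
    and E'V: "E' \<subseteq> V' \<times> V'" and F'W: "F' \<subseteq> W' \<times> W'" and ginj: "inj_on g W'"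
    and a: "a \<notin> V'" and b: "b \<notin> V'" and ab: "a \<noteq> b"
    and AB: "A \<noteq> B" "A \<notin> g ` W'" "B \<notin> g ` W'" and p: "p \<in> V'"
  shows "graph_iso (V' \<union> {a, b}) (E' \<union> {(p, a), (a, p), (p, b), (b, p)})
     (g ` W' \<union> {A, B}) (map_prod g g ` F' \<union> {(g (f' p), A), (A, g (f' p)), (g (f' p), B), (B, g (f' p))})"
proof -
  define f where "f v = (if v = a then A else if v = b then B else g (f' v))" for v
  have f'W: "\<And>v. v \<in> V' \<Longrightarrow> f' v \<in> W'" using bij bij_betw_apply by fast
  have f'inj: "\<And>u v. u \<in> V' \<Longrightarrow> v \<in> V' \<Longrightarrow> f' u = f' v \<Longrightarrow> u = v"
    using bij unfolding bij_betw_def inj_on_def by blast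
  have fV': "\<And>v. v \<in> V' \<Longrightarrow> f v = g (f' v)" unfolding f_def using a b by auto
  have gin: "\<And>u v. u \<in> W' \<Longrightarrow> v \<in> W' \<Longrightarrow> g u = g v \<Longrightarrow> u = v"
    using ginj unfolding inj_on_def by blast
  have q: "g (f' p) \<in> g ` W'" using f'W p by auto
  have qA: "g (f' p) \<noteq> A" "g (f' p) \<noteq> B" using q AB by auto
  have mem: "(g s, g t) \<in> map_prod g g ` F' \<longleftrightarrow> (s, t) \<in> F'" if "s \<in> W'" "t \<in> W'" for s t
  proof
    assume "(g s, g t) \<in> map_prod g g ` F'"
    then obtain s' t' where "(s', t') \<in> F'" "g s = g s'" "g t = g t'" by auto
    moreover then have "s' \<in> W'" "t' \<in> W'" using F'W by auto
    ultimately show "(s, t) \<in> F'" using gin that by metis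
  qed auto
  have notA: "(A, y) \<notin> map_prod g g ` F'" "(y, A) \<notin> map_prod g g ` F'"
    "(B, y) \<notin> map_prod g g ` F'" "(y, B) \<notin> map_prod g g ` F'" for y
    using F'W AB by auto
  show ?thesis unfolding graph_iso_def
  proof (intro exI[of _ f] conjI ballI)
    show "bij_betw f (V' \<union> {a, b}) (g ` W' \<union> {A, B})"
      unfolding bij_betw_def
    proof
      show "inj_on f (V' \<union> {a, b})"
      proof (rule inj_onI)
        fix u v assume u: "u \<in> V' \<union> {a, b}" and v: "v \<in> V' \<union> {a, b}" and e: "f u = f v"
        show "u = v"
        proof (cases "u \<in> V'"; cases "v \<in> V'")
          assume "u \<in> V'" "v \<in> V'"
          then show ?thesis using e fV' gin f'W f'inj by metis
        next
          assume "u \<in> V'" "v \<notin> V'"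
          then show ?thesis using e fV' f'W AB v unfolding f_def by (auto split: if_splits)
        next
          assume "u \<notin> V'" "v \<in> V'"
          then show ?thesis using e fV' f'W AB u unfolding f_def by (auto split: if_splits)
        next
          assume "u \<notin> V'" "v \<notin> V'"
          then show ?thesis using e AB u v ab unfolding f_def by (auto split: if_splits)
        qed
      qed
      have "f ` V' = g ` W'" using bij fV' unfolding bij_betw_def by (auto simp: image_image)
      moreover have "f a = A" "f b = B" unfolding f_def using ab by auto
      ultimately show "f ` (V' \<union> {a, b}) = g ` W' \<union> {A, B}" by auto
    qed
  next
    fix u v assume u: "u \<in> V' \<union> {a, b}" and v: "v \<in> V' \<union> {a, b}"
    have fa: "f a = A" "f b = B" unfolding f_def using ab by auto
    have paE: "(p, a) \<noteq> (x, y) \<and> (a, p) \<noteq> (x, y) \<and> (p, b) \<noteq> (x, y) \<and> (b, p) \<noteq> (x, y)"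
      if "x \<in> V'" "y \<in> V'" for x y using that a b by auto
    show "(u, v) \<in> E' \<union> {(p, a), (a, p), (p, b), (b, p)} \<longleftrightarrow>
          (f u, f v) \<in> map_prod g g ` F' \<union> {(g (f' p), A), (A, g (f' p)), (g (f' p), B), (B, g (f' p))}"
    proof (cases "u \<in> V'"; cases "v \<in> V'")
      assume uv: "u \<in> V'" "v \<in> V'"
      have "(u, v) \<in> E' \<union> {(p, a), (a, p), (p, b), (b, p)} \<longleftrightarrow> (u, v) \<in> E'" using paE[OF uv] by auto
      also have "\<dots> \<longleftrightarrow> (f' u, f' v) \<in> F'" using iso uv by auto
      also have "\<dots> \<longleftrightarrow> (g (f' u), g (f' v)) \<in> map_prod g g ` F'" using mem f'W uv by auto
      also have "\<dots> \<longleftrightarrow> (f u, f v) \<in> map_prod g g ` F' \<union> {(g (f' p), A), (A, g (f' p)), (g (f' p), B), (B, g (f' p))}"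
        using fV' uv f'W AB by auto
      finally show ?thesis .
    next
      assume uv: "u \<in> V'" "v \<notin> V'"
      have "f' u = f' p \<longleftrightarrow> u = p" using f'inj uv p by blast
      then have key: "g (f' u) = g (f' p) \<longleftrightarrow> u = p" using gin f'W uv p by metis
      have gu: "g (f' u) \<noteq> A" "g (f' u) \<noteq> B" using AB f'W uv by auto
      have fu: "f u = g (f' u)" using fV' uv by auto
      let ?M = "map_prod g g ` F'" and ?S = "{(g (f' p), A), (A, g (f' p)), (g (f' p), B), (B, g (f' p))}"
      have "v = a \<or> v = b" using uv v by auto
      then show ?thesis
      proof
        assume oa: "v = a"
        have L: "(u, v) \<in> E' \<union> {(p, a), (a, p), (p, b), (b, p)} \<longleftrightarrow> u = p"
          using uv oa a b ab E'V by auto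
        have "(f u, f v) \<in> ?M \<union> ?S \<longleftrightarrow> (g (f' u), A) \<in> ?S"
          using notA(2)[of "g (f' u)"] by (simp add: fu oa fa)
        also have "\<dots> \<longleftrightarrow> u = p" using key gu qA AB by auto
        finally show ?thesis using L by simp
      next
        assume oa: "v = b"
        have L: "(u, v) \<in> E' \<union> {(p, a), (a, p), (p, b), (b, p)} \<longleftrightarrow> u = p"
          using uv oa a b ab E'V by auto
        have "(f u, f v) \<in> ?M \<union> ?S \<longleftrightarrow> (g (f' u), B) \<in> ?S"
          using notA(4)[of "g (f' u)"] by (simp add: fu oa fa)
        also have "\<dots> \<longleftrightarrow> u = p" using key gu qA AB by auto
        finally show ?thesis using L by simp
      qed
    next
      assume uv: "u \<notin> V'" "v \<in> V'"
      have "f' v = f' p \<longleftrightarrow> v = p" using f'inj uv p by blast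
      then have key: "g (f' v) = g (f' p) \<longleftrightarrow> v = p" using gin f'W uv p by metis
      have gu: "g (f' v) \<noteq> A" "g (f' v) \<noteq> B" using AB f'W uv by auto
      have fu: "f v = g (f' v)" using fV' uv by auto
      let ?M = "map_prod g g ` F'" and ?S = "{(g (f' p), A), (A, g (f' p)), (g (f' p), B), (B, g (f' p))}"
      have "u = a \<or> u = b" using uv u by auto
      then show ?thesis
      proof
        assume oa: "u = a"
        have L: "(u, v) \<in> E' \<union> {(p, a), (a, p), (p, b), (b, p)} \<longleftrightarrow> v = p"
          using uv oa a b ab E'V by auto
        have "(f u, f v) \<in> ?M \<union> ?S \<longleftrightarrow> (A, g (f' v)) \<in> ?S"
          using notA(1)[of "g (f' v)"] by (simp add: fu oa fa)
        also have "\<dots> \<longleftrightarrow> v = p" using key gu qA AB by auto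
        finally show ?thesis using L by simp
      next
        assume oa: "u = b"
        have L: "(u, v) \<in> E' \<union> {(p, a), (a, p), (p, b), (b, p)} \<longleftrightarrow> v = p"
          using uv oa a b ab E'V by auto
        have "(f u, f v) \<in> ?M \<union> ?S \<longleftrightarrow> (B, g (f' v)) \<in> ?S"
          using notA(3)[of "g (f' v)"] by (simp add: fu oa fa)
        also have "\<dots> \<longleftrightarrow> v = p" using key gu qA AB by auto
        finally show ?thesis using L by simp
      qed
    next
      assume uv: "u \<notin> V'" "v \<notin> V'"
      have L: "(u, v) \<notin> E' \<union> {(p, a), (a, p), (p, b), (b, p)}" using uv E'V p by auto
      have fu: "f u = A \<or> f u = B" "f v = A \<or> f v = B" using u v uv fa by auto
      have "(f u, f v) \<notin> map_prod g g ` F'" using fu(1) notA(1) notA(3) by metis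
      moreover have "(f u, f v) \<notin> {(g (f' p), A), (A, g (f' p)), (g (f' p), B), (B, g (f' p))}"
        using fu qA by auto
      ultimately show ?thesis using L by blast
    qed
  qed
qed



lemma base_case:
  assumes sbt: "strictly_binary_tree V E r" and c1: "card V = 1"
  shows "\<exists>(X :: nat set) d. in_U X d \<and> graph_iso V E (rep_nodes X d) (rep_edges X d)"
proof -
  obtain v where V: "V = {v}" using c1 by (metis One_nat_def card_1_singleton_iff)
  have "E \<subseteq> V \<times> V" "irrefl E" using sbt unfolding strictly_binary_tree_def finite_tree_def by auto
  then have E: "E = {}" using V unfolding irrefl_def by auto
  define d :: "nat \<Rightarrow> nat \<Rightarrow> real" where "d = (\<lambda>_ _. 0)"
  have um: "ultrametric_space {0} d" unfolding ultrametric_space_def d_def by auto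
  have Sp: "Sp {0} d = {}" unfolding Sp_def by auto
  have U: "in_U {0} d" unfolding in_U_def using um Sp by auto
  have N: "rep_nodes {0} d = {{0}}"
  proof
    show "rep_nodes {0} d \<subseteq> {{0}}"
    proof
      fix B assume "B \<in> rep_nodes {0} d"
      then show "B \<in> {{0}}" by (induction rule: rep_nodes.induct) auto
    qed
  qed (auto intro: rep_nodes.root)
  have Ed: "rep_edges {0} d = {}" unfolding rep_edges_def N by auto
  have "graph_iso V E (rep_nodes {0} d) (rep_edges {0} d)"
    unfolding graph_iso_def N Ed V E by (intro exI[of _ "\<lambda>_. {0}"]) (auto simp: bij_betw_def)
  then show ?thesis using U by blast
qed

lemma main:
  "strictly_binary_tree V E r \<Longrightarrow>
   \<exists>(X :: nat set) d. in_U X d \<and> graph_iso V E (rep_nodes X d) (rep_edges X d)"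
proof (induction "card V" arbitrary: V E rule: less_induct)
  case less
  show ?case
  proof (cases "card V = 1")
    case True
    show ?thesis by (rule base_case[OF less.prems True])
  next
    case False
    obtain p a b where ab: "a \<noteq> b" "a \<in> V" "b \<in> V" "a \<noteq> r" "b \<noteq> r"
      "{w. (a, w) \<in> E} = {p}" "{w. (b, w) \<in> E} = {p}"
      using cherry[OF less.prems False] by blast
    define V' where "V' = V - {a, b}"
    define E' where "E' = {(x, y) \<in> E. x \<notin> {a, b} \<and> y \<notin> {a, b}}"
    note rc = remove_cherry[OF less.prems ab V'_def E'_def]
    obtain X' :: "nat set" and d' :: "nat \<Rightarrow> nat \<Rightarrow> real" where IH: "in_U X' d'" "graph_iso V' E' (rep_nodes X' d') (rep_edges X' d')"
      using less.hyps[OF rc(2) rc(1)] by blast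
    obtain f' where bij: "bij_betw f' V' (rep_nodes X' d')"
      and iso: "\<forall>u\<in>V'. \<forall>v\<in>V'. (u, v) \<in> E' \<longleftrightarrow> (f' u, f' v) \<in> rep_edges X' d'"
      using IH(2) unfolding graph_iso_def by blast
    have finX': "finite X'" and um': "ultrametric_space X' d'" and neX': "X' \<noteq> {}"
      using IH(1) unfolding in_U_def by auto
    have q: "f' p \<in> rep_nodes X' d'" using bij rc(3) bij_betw_apply by fast
    have qs: "f' p \<subseteq> X'" "f' p \<noteq> {}" using nodes_sub[OF um' finX' neX' q] by auto
    have "\<not> 2 \<le> card (f' p)"
    proof
      assume c2: "2 \<le> card (f' p)"
      obtain C1 C2 where C: "C1 \<in> child_sets (f' p) d'" "C2 \<in> child_sets (f' p) d'" "C1 \<noteq> C2"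
        using two_children[OF um' qs(1) c2] by blast
      have e: "(f' p, C1) \<in> rep_edges X' d'" "(f' p, C2) \<in> rep_edges X' d'"
        unfolding rep_edges_def using q c2 C by auto
      have "C1 \<in> rep_nodes X' d'" "C2 \<in> rep_nodes X' d'"
        using rep_nodes.child[OF q c2] C by auto
      then obtain v1 v2 where v: "v1 \<in> V'" "v2 \<in> V'" "f' v1 = C1" "f' v2 = C2"
        using bij unfolding bij_betw_def by (metis imageE)
      have "(p, v1) \<in> E'" "(p, v2) \<in> E'" using iso rc(3) v e by auto
      then have "v1 = v2" by (rule rc(8))
      then show False using v C(3) by simp
    qed
    moreover have "finite (f' p)" using qs finX' finite_subset by blast
    ultimately have "card (f' p) = 1" using qs(2) by (simp add: Suc_leI card_gt_0_iff le_antisym)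
    then obtain x where x: "f' p = {x}" by (metis One_nat_def card_1_singleton_iff)
    have xX: "x \<in> X'" using qs x by auto
    define x' where "x' = Suc (Max X')"
    have x'X: "x' \<notin> X'" unfolding x'_def using finX' Max_ge Suc_n_not_le_n by blast
    interpret sp: split_pt X' d' x x' using IH(1) xX x'X by unfold_locales
    have sx: "{x} \<in> rep_nodes X' d'" using q x by simp
    have ninj: "inj_on sp.ext (rep_nodes X' d')"
      using sp.ext_inj inj_on_subset sp.nodes' by blast
    have Anot: "{x} \<notin> sp.ext ` rep_nodes X' d'"
    proof
      assume "{x} \<in> sp.ext ` rep_nodes X' d'"
      then obtain B where "B \<in> rep_nodes X' d'" "sp.ext B = {x}" by auto
      then show False using sp.x'x unfolding sp.ext_def by (auto split: if_splits)
    qed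
    have Bnot: "{x'} \<notin> sp.ext ` rep_nodes X' d'"
    proof
      assume "{x'} \<in> sp.ext ` rep_nodes X' d'"
      then obtain B where B: "B \<in> rep_nodes X' d'" "sp.ext B = {x'}" by auto
      then have "B \<subseteq> X'" "B \<noteq> {}" using sp.nodes' by auto
      then show False using B(2) x'X unfolding sp.ext_def by (auto split: if_splits)
    qed
    have FW: "rep_edges X' d' \<subseteq> rep_nodes X' d' \<times> rep_nodes X' d'"
      unfolding rep_edges_kid using kid_sub by blast
    have conv: "map_prod sp.ext sp.ext ` (kid X' d')\<inverse> = (map_prod sp.ext sp.ext ` kid X' d')\<inverse>"
      by auto
    have edges: "rep_edges sp.XX sp.dd = map_prod sp.ext sp.ext ` rep_edges X' d' \<union>
        {(sp.ext (f' p), {x}), ({x}, sp.ext (f' p)), (sp.ext (f' p), {x'}), ({x'}, sp.ext (f' p))}"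
      unfolding rep_edges_kid sp.kid_new[OF sx] image_Un conv x sp.ext_x by auto
    have nodes: "rep_nodes sp.XX sp.dd = sp.ext ` rep_nodes X' d' \<union> {{x}, {x'}}"
      by (rule sp.nodes_new[OF sx])
    have a: "a \<notin> V'" and b: "b \<notin> V'" using rc by auto
    have "graph_iso (V' \<union> {a, b}) (E' \<union> {(p, a), (a, p), (p, b), (b, p)})
       (sp.ext ` rep_nodes X' d' \<union> {{x}, {x'}})
       (map_prod sp.ext sp.ext ` rep_edges X' d' \<union>
        {(sp.ext (f' p), {x}), ({x}, sp.ext (f' p)), (sp.ext (f' p), {x'}), ({x'}, sp.ext (f' p))})"
      by (rule iso_extend[OF bij iso rc(9) FW ninj a b ab(1) _ Anot Bnot rc(3)])
        (use sp.x'x in auto)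
    then have "graph_iso V E (rep_nodes sp.XX sp.dd) (rep_edges sp.XX sp.dd)"
      unfolding nodes edges using rc(4,5) by simp
    then show ?thesis using sp.inU by blast
  qed
qed

theorem lemma18:
  fixes V :: "'v set" and E :: "('v \<times> 'v) set" and r :: 'v
  assumes "strictly_binary_tree V E r"
  shows "\<exists>(X :: nat set) d. in_U X d \<and> graph_iso V E (rep_nodes X d) (rep_edges X d)"
  using main[OF assms] .


end
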